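(* Let $d\ge1$, $j>0$, $k\ge1$, let $s\ge\frac{d+1}{d}k+j$, and let $n\ge s$. Then a $j$-junta $\mathcal{J}\subseteq\binom{[n]}{k}$ does not contain a $(d,k,s)$-cluster if and only if $\mathcal{J}$ is $(d+1)$-wise intersecting.
   Context: A family $\mathcal{J}\subseteq\binom{[n]}{k}$ is a $j$-junta if there exist a set $J\subseteq[n]$ with $|J|=j$ and a family $\mathcal{G}\subseteq\mathcal{P}(J)$ such that for every $A\in\binom{[n]}{k}$, $A\in\mathcal{J}$ iff $A\cap J\in\mathcal{G}$. A family $\{A_0,\dots,A_d\}\subseteq\binom{[n]}{k}$ is a $(d,k,s)$-cluster if $|A_0\cup\cdots\cup A_d|\le s$ and $A_0\cap\cdots\cap A_d=\varnothing$; a family contains it if all $A_i$ belong to the family. A family is $t$-wise intersecting if it does not contain $t$ sets (not necessarily distinct) whose intersection is empty. *)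

theory Defs
  imports Complex_Main
begin

definition ksets :: "nat \<Rightarrow> nat \<Rightarrow> nat set set" where
  "ksets n k = {A. A \<subseteq> {1..n} \<and> card A = k}"

definition is_junta :: "nat \<Rightarrow> nat \<Rightarrow> nat \<Rightarrow> nat set set \<Rightarrow> bool" where
  "is_junta n k j F \<longleftrightarrow> F \<subseteq> ksets n k \<and>
     (\<exists>J G. J \<subseteq> {1..n} \<and> card J = j \<and> G \<subseteq> Pow J \<and>
        (\<forall>A \<in> ksets n k. A \<in> F \<longleftrightarrow> A \<inter> J \<in> G))"

definition contains_cluster :: "nat \<Rightarrow> nat \<Rightarrow> nat \<Rightarrow> nat set set \<Rightarrow> bool" where
  "contains_cluster d k s F \<longleftrightarrow>
     (\<exists>A :: nat \<Rightarrow> nat set. (\<forall>i\<le>d. A i \<in> F \<and> card (A i) = k) \<and>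
        card (\<Union>i\<le>d. A i) \<le> s \<and> (\<Inter>i\<le>d. A i) = {})"

text \<open>F is t-wise intersecting: no t members (not necessarily distinct) have empty intersection.\<close>
definition t_wise_intersecting :: "nat \<Rightarrow> nat set set \<Rightarrow> bool" where
  "t_wise_intersecting t F \<longleftrightarrow>
     \<not> (\<exists>A :: nat \<Rightarrow> nat set. (\<forall>i<t. A i \<in> F) \<and> (\<Inter>i<t. A i) = {})"

end

theory Submission imports Defs begin

lemma cover:
  fixes d k m x :: nat
  assumes "d \<ge> 1" "k \<ge> 1" "d*m \<ge> (d+1)*k" "x < m"
  shows "\<exists>i\<le>d. min (i*(m-k)) k \<le> x \<and> x < min (i*(m-k)) k + (m-k)"
proof -
  have mk: "m > k"
  proof (rule ccontr)
    assume "\<not> k < m"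
    then have "d*m \<le> d*k" by simp
    moreover have "(d+1)*k = d*k + k" by simp
    ultimately show False using assms(2,3) by linarith
  qed
  have dk: "d*(m-k) \<ge> k" using assms mk by (simp add: algebra_simps diff_mult_distrib2)
  show ?thesis
  proof (cases "x \<ge> k")
    case True
    have "min (d*(m-k)) k = k" using dk by simp
    then show ?thesis using True assms(4) mk by (intro exI[of _ d]) auto
  next
    case False
    define i where "i = x div (m-k)"
    have a: "i*(m-k) \<le> x" unfolding i_def by (metis div_times_less_eq_dividend)
    have b: "x < i*(m-k) + (m-k)" unfolding i_def using mk
      by (metis add.commute div_mult_mod_eq mod_less_divisor nat_add_left_cancel_less zero_less_diff)
    have c: "i*(m-k) < k" using a False by simp
    have "i < d" using c dk by (metis le_less_trans mult_less_cancel2 not_less)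
    then show ?thesis using a b c by (intro exI[of _ i]) auto
  qed
qed

lemma card_C:
  fixes st k m :: nat
  assumes "st \<le> k" "k < m"
  shows "card {x. x < m \<and> \<not> (st \<le> x \<and> x < st + (m-k))} = k"
proof -
  have "{x. x < m \<and> \<not> (st \<le> x \<and> x < st + (m-k))} = {0..<st} \<union> {st+(m-k)..<m}"
    using assms by auto
  moreover have "card ({0..<st} \<union> {st+(m-k)..<m}) = st + (m - (st+(m-k)))"
    by (subst card_Un_disjoint) auto
  ultimately show ?thesis using assms by simp
qed

lemma mk_lemma:
  fixes d k m :: nat
  assumes "k \<ge> 1" "d*m \<ge> (d+1)*k"
  shows "k < m"
proof (rule ccontr)
  assume "\<not> k < m"
  then have "d*m \<le> d*k" by simp
  moreover have "(d+1)*k = d*k + k" by simp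
  ultimately show False using assms by linarith
qed

theorem proposition4p2:
  fixes d j k s n :: nat and F :: "nat set set"
  assumes "d \<ge> 1" and "j > 0" and "k \<ge> 1"
    and "real s \<ge> (real d + 1) / real d * real k + real j"
    and "n \<ge> s"
    and "is_junta n k j F"
  shows "\<not> contains_cluster d k s F \<longleftrightarrow> t_wise_intersecting (d + 1) F"
proof -
  have ivl: "{..<d+1} = {..d}" by auto
  have easy: "\<not> contains_cluster d k s F" if "t_wise_intersecting (d + 1) F"
    using that unfolding contains_cluster_def t_wise_intersecting_def ivl
    by (metis Suc_eq_plus1 less_Suc_eq_le)
  have hard: "contains_cluster d k s F" if nt: "\<not> t_wise_intersecting (d + 1) F"
  proof -
    obtain A where A1: "\<forall>i\<le>d. A i \<in> F" and A2: "(\<Inter>i\<le>d. A i) = {}"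
      using nt unfolding t_wise_intersecting_def ivl
      by (metis Suc_eq_plus1 less_Suc_eq_le)
    obtain J G where Fk: "F \<subseteq> ksets n k" and J: "J \<subseteq> {1..n}" "card J = j" and G: "G \<subseteq> Pow J"
      and JG: "\<forall>A \<in> ksets n k. A \<in> F \<longleftrightarrow> A \<inter> J \<in> G"
      using assms(6) unfolding is_junta_def by blast
    have rd: "real d > 0" using assms(1) by simp
    have "real j \<le> (real d + 1) / real d * real k + real j" using rd by simp
    then have sj: "j \<le> s" using assms(4) by linarith
    define m where "m = s - j"
    have "real d * ((real d + 1) / real d * real k) = (real d + 1) * real k" using rd by simp
    moreover have "(real d + 1) / real d * real k \<le> real s - real j" using assms(4) by linarith
    ultimately have "(real d + 1) * real k \<le> real d * (real s - real j)"
      using rd by (metis mult_left_mono less_imp_le)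
    also have "real s - real j = real m" using sj m_def by simp
    finally have "real ((d+1)*k) \<le> real (d*m)" by (simp add: algebra_simps)
    then have dm: "(d+1)*k \<le> d*m" by linarith
    have mk: "k < m" using mk_lemma[OF assms(3) dm] .
    define R where "R = {1..n} - J"
    have cR: "card R = n - j" unfolding R_def using J by (simp add: card_Diff_subset finite_subset)
    have "m \<le> card R" using cR m_def assms(5) by simp
    then obtain S where S: "S \<subseteq> R" "card S = m" "finite S" by (metis obtain_subset_with_card_n)
    obtain f where f: "bij_betw f {0..<m} S" using ex_bij_betw_nat_finite[OF S(3)] S(2) by metis
    have finj: "inj_on f {0..<m}" and fim: "f ` {0..<m} = S" using f by (auto simp: bij_betw_def)
    define st where "st i = min (i*(m-k)) k" for i
    define C where "C i = {x. x < m \<and> \<not> (st i \<le> x \<and> x < st i + (m-k))}" for i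
    have cC: "card (C i) = k" for i unfolding C_def by (rule card_C) (use mk st_def in auto)
    have CS: "C i \<subseteq> {0..<m}" for i unfolding C_def by auto
    have finA: "finite (A i)" "card (A i) = k" if "i \<le> d" for i
    proof -
      have "A i \<in> ksets n k" using A1 that Fk by auto
      then have "A i \<subseteq> {1..n}" "card (A i) = k" unfolding ksets_def by auto
      then show "finite (A i)" "card (A i) = k" using finite_subset by blast+
    qed
    have cB: "card (A i \<inter> J) \<le> k" if "i \<le> d" for i
      using finA[OF that] by (metis card_mono inf_le1)
    have "\<forall>i. \<exists>E. i \<le> d \<longrightarrow> E \<subseteq> C i \<and> card E = k - card (A i \<inter> J)"
    proof
      fix i
      have "k - card (A i \<inter> J) \<le> card (C i)" using cC by simp
      then obtain E where "E \<subseteq> C i" "card E = k - card (A i \<inter> J)" by (metis obtain_subset_with_card_n)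
      then show "\<exists>E. i \<le> d \<longrightarrow> E \<subseteq> C i \<and> card E = k - card (A i \<inter> J)" by blast
    qed
    then obtain E where E: "\<And>i. i \<le> d \<Longrightarrow> E i \<subseteq> C i \<and> card (E i) = k - card (A i \<inter> J)"
      by metis
    define A' where "A' i = (A i \<inter> J) \<union> f ` E i" for i
    have fE: "f ` E i \<subseteq> S" "card (f ` E i) = card (E i)" "finite (E i)" if "i \<le> d" for i
    proof -
      have "E i \<subseteq> {0..<m}" using E[OF that] CS by blast
      then show "f ` E i \<subseteq> S" "card (f ` E i) = card (E i)" "finite (E i)"
        using fim finj by (auto intro: card_image inj_on_subset finite_subset)
    qed
    have fEJ: "f ` E i \<inter> J = {}" if "i \<le> d" for i using fE(1)[OF that] S(1) R_def by auto
    have A'J: "A' i \<inter> J = A i \<inter> J" if "i \<le> d" for i using fEJ[OF that] A'_def by auto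
    have cA': "card (A' i) = k" if "i \<le> d" for i
    proof -
      have "card (A' i) = card (A i \<inter> J) + card (f ` E i)"
        unfolding A'_def using fEJ[OF that] finA[OF that] fE[OF that]
        by (intro card_Un_disjoint) auto
      then show ?thesis using fE(2)[OF that] E[OF that] cB[OF that] by simp
    qed
    have A'sub: "A' i \<subseteq> {1..n}" if "i \<le> d" for i
      using fE(1)[OF that] S(1) R_def J(1) unfolding A'_def by auto
    have A'F: "A' i \<in> F" if "i \<le> d" for i
    proof -
      have k1: "A' i \<in> ksets n k" using A'sub[OF that] cA'[OF that] unfolding ksets_def by auto
      have k2: "A i \<in> ksets n k" using A1 that Fk by auto
      show ?thesis using JG k1 k2 A'J[OF that] A1 that by auto
    qed
    have un: "card (\<Union>i\<le>d. A' i) \<le> s"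
    proof -
      have "(\<Union>i\<le>d. A' i) \<subseteq> J \<union> S" using fE(1) unfolding A'_def by auto
      moreover have "finite (J \<union> S)" using J(1) S(3) by (auto intro: finite_subset)
      ultimately have "card (\<Union>i\<le>d. A' i) \<le> card (J \<union> S)" by (rule card_mono[rotated])
      also have "\<dots> \<le> card J + card S" by (rule card_Un_le)
      finally show ?thesis using J(2) S(2) m_def sj by simp
    qed
    have int: "(\<Inter>i\<le>d. A' i) = {}"
    proof (rule ccontr)
      assume "(\<Inter>i\<le>d. A' i) \<noteq> {}"
      then obtain x where x: "\<And>i. i \<le> d \<Longrightarrow> x \<in> A' i" by blast
      show False
      proof (cases "x \<in> J")
        case True
        then have "x \<in> A i" if "i \<le> d" for i using x[OF that] A'J[OF that] by blast
        then show False using A2 by blast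
      next
        case False
        then have y: "\<exists>y\<in>E i. x = f y" if "i \<le> d" for i using x[OF that] unfolding A'_def by auto
        obtain y0 where y0: "y0 \<in> E 0" "x = f y0" using y[of 0] by auto
        have y0C: "y0 \<in> C 0" using y0(1) E[of 0] by blast
        have y0m: "y0 < m" using y0C CS[of 0] by auto
        obtain i where i: "i \<le> d" "st i \<le> y0 \<and> y0 < st i + (m-k)"
          using cover[OF assms(1,3) dm y0m] st_def by auto
        obtain yi where yi: "yi \<in> E i" "x = f yi" using y[OF i(1)] by auto
        have yiC: "yi \<in> C i" using yi(1) E[OF i(1)] by auto
        have "yi \<in> {0..<m}" using yiC CS[of i] by blast
        moreover have "y0 \<in> {0..<m}" using y0m by simp
        ultimately have "yi = y0" using inj_onD[OF finj] yi(2) y0(2) by metis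
        then show False using yiC i(2) unfolding C_def by auto
      qed
    qed
    show ?thesis unfolding contains_cluster_def using A'F cA' un int by blast
  qed
  show ?thesis using easy hard by blast
qed

end
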